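(* For integers $p\ge1$ and $0\le k\le n$, and all $x$, \[ \sum_{j=0}^{n-k}\binom{n-k}{j}(-1)^{j}E_{j+k}^{(p)}(x)=(-1)^{n+k+1}\sum_{j=0}^{k}\binom{k}{j}E_{n-j}^{(p)}(x)+2(-1)^{n+k}\sum_{j=0}^{k}\binom{k}{j}E_{n-j}^{(p-1)}(x-1). \]
   Context: For $p\ge0$, the higher-order Euler polynomials $E_n^{(p)}(x)$ are defined by $\sum_{n\ge0}E_n^{(p)}(x)\frac{t^n}{n!}=e^{xt}\left(\frac{2}{e^t+1}\right)^p$; in particular $E_n^{(0)}(x)=x^n$. *)

theory Defs
  imports "HOL-Computational_Algebra.Formal_Power_Series"
begin

definition higher_euler :: "nat \<Rightarrow> nat \<Rightarrow> real \<Rightarrow> real" where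
  "higher_euler p n x =
     fact n * fps_nth (fps_exp x * (fps_const 2 / (fps_exp 1 + 1)) ^ p) n"

end

theory Submission
  imports Defs "HOL-Computational_Algebra.Polynomial"
begin



definition Lf :: "nat \<Rightarrow> (nat \<Rightarrow> real) \<Rightarrow> real poly \<Rightarrow> real" where
  "Lf n e q = (\<Sum>i\<le>n. coeff q i * e i)"

lemma Lf_monom_sum:
  assumes "finite A" "\<forall>j\<in>A. f j \<le> n"
  shows "Lf n e (\<Sum>j\<in>A. monom (c j) (f j)) = (\<Sum>j\<in>A. c j * e (f j))"
proof -
  have "Lf n e (\<Sum>j\<in>A. monom (c j) (f j)) = (\<Sum>i\<le>n. \<Sum>j\<in>A. (if f j = i then c j else 0) * e i)"
    unfolding Lf_def coeff_sum coeff_monom by (simp add: sum_distrib_right)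
  also have "\<dots> = (\<Sum>j\<in>A. \<Sum>i\<in>{..n}. (if i = f j then c j * e i else 0))"
    by (subst sum.swap) (intro sum.cong refl, auto)
  also have "\<dots> = (\<Sum>j\<in>A. c j * e (f j))"
    using assms by (intro sum.cong) (auto simp: sum.delta)
  finally show ?thesis .
qed

lemma Lf_smult_sum:
  assumes "finite A"
  shows "Lf n e (\<Sum>j\<in>A. smult (c j) (q j)) = (\<Sum>j\<in>A. c j * Lf n e (q j))"
  unfolding Lf_def coeff_sum coeff_smult
  by (simp add: sum_distrib_left sum_distrib_right mult.assoc) (subst sum.swap, rule refl)

lemma P1: "monom 1 k * (1 - monom (1::real) 1)^m = (\<Sum>j=0..m. monom (real (m choose j) * (-1)^j) (j+k))"
proof -
  have "(1 - monom (1::real) 1)^m = (monom (-1) 1 + 1)^m"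
    by (simp add: minus_monom[symmetric] add.commute)
  also have "\<dots> = (\<Sum>j\<le>m. of_nat (m choose j) * monom (-1) 1 ^ j * 1^(m-j))"
    by (rule binomial_ring)
  also have "\<dots> = (\<Sum>j\<le>m. monom (real (m choose j) * (-1)^j) j)"
    by (intro sum.cong) (simp_all add: monom_power of_nat_poly smult_monom)
  finally show ?thesis
    by (simp add: sum_distrib_left mult_monom atLeast0AtMost add.commute)
qed

lemma P2: "(monom (1::real) 1 - 1)^m = (\<Sum>i=0..m. monom (real (m choose i) * (-1)^(m-i)) i)"
proof -
  have "(monom (1::real) 1 - 1)^m = (monom 1 1 + monom (-1) 0)^m"
    by (simp add: monom_0 one_pCons diff_conv_add_uminus)
  also have "\<dots> = (\<Sum>i\<le>m. of_nat (m choose i) * monom 1 1 ^ i * monom (-1) 0^(m-i))"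
    by (rule binomial_ring)
  also have "\<dots> = (\<Sum>i\<le>m. monom (real (m choose i) * (-1)^(m-i)) i)"
    by (intro sum.cong) (simp_all add: monom_power of_nat_poly smult_monom mult_monom)
  finally show ?thesis by (simp add: atLeast0AtMost)
qed

lemma Lf_smult: "Lf n e (smult c q) = c * Lf n e q"
  unfolding Lf_def by (simp add: sum_distrib_left mult.assoc)

lemma negpow: "(monom 1 1 - 1 :: real poly)^m = smult ((-1)^m) ((1 - monom 1 1)^m)"
  by (induction m) (auto simp: algebra_simps smult_diff_right)

lemma P3:
  assumes "k \<le> n"
  shows "(\<Sum>j=0..k. smult (real (k choose j)) ((monom 1 1 - 1)^(n-j))) =
         smult ((-1)^(n-k)) (monom 1 k * (1 - monom (1::real) 1)^(n-k))"
proof -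
  define a :: "real poly" where "a = monom 1 1 - 1"
  have "(\<Sum>j=0..k. smult (real (k choose j)) (a^(n-j))) =
        (\<Sum>j=0..k. smult (real (k choose (k - j))) (a^(n-(k-j))))"
    by (subst sum.atLeastAtMost_rev) simp
  also have "\<dots> = (\<Sum>j=0..k. smult (real (k choose j)) (a^(n-k) * a^j))"
    using assms by (intro sum.cong refl) (auto simp: power_add[symmetric] binomial_symmetric[symmetric])
  also have "\<dots> = a^(n-k) * (\<Sum>j\<le>k. of_nat (k choose j) * a^j * 1^(k-j))"
    by (simp add: sum_distrib_left atLeast0AtMost of_nat_poly mult.commute mult.left_commute)
  also have "\<dots> = a^(n-k) * (a + 1)^k"
    by (simp add: binomial_ring)
  also have "a + 1 = monom 1 1" by (simp add: a_def)
  also have "a^(n-k) = smult ((-1)^(n-k)) ((1 - monom 1 1)^(n-k))"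
    unfolding a_def by (rule negpow)
  finally show ?thesis
    by (simp add: a_def monom_power mult.commute)
qed

lemma comb:
  fixes e :: "nat \<Rightarrow> real"
  assumes "k \<le> n"
  shows "(\<Sum>j=0..n-k. real (n - k choose j) * (-1)^j * e (j + k)) =
    (-1)^(n+k) * (\<Sum>j=0..k. real (k choose j) * (\<Sum>i=0..n-j. real (n - j choose i) * (-1)^(n-j-i) * e i))"
proof -
  have L: "(\<Sum>j=0..n-k. real (n - k choose j) * (-1)^j * e (j + k)) =
     Lf n e (monom 1 k * (1 - monom (1::real) 1)^(n-k))"
    unfolding P1 using assms by (subst Lf_monom_sum) auto
  have I: "(\<Sum>i=0..n-j. real (n - j choose i) * (-1)^(n-j-i) * e i) = Lf n e ((monom 1 1 - 1)^(n-j))" for j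
    unfolding P2 by (subst Lf_monom_sum) (auto simp: mult.assoc)
  have "(\<Sum>j=0..k. real (k choose j) * (\<Sum>i=0..n-j. real (n - j choose i) * (-1)^(n-j-i) * e i))
      = Lf n e (\<Sum>j=0..k. smult (real (k choose j)) ((monom 1 1 - 1)^(n-j)))"
    unfolding I by (subst Lf_smult_sum) auto
  also have "\<dots> = (-1)^(n-k) * Lf n e (monom 1 k * (1 - monom (1::real) 1)^(n-k))"
    unfolding P3[OF assms] Lf_smult ..
  finally have R: "(\<Sum>j=0..k. real (k choose j) * (\<Sum>i=0..n-j. real (n - j choose i) * (-1)^(n-j-i) * e i))
      = (-1)^(n-k) * Lf n e (monom 1 k * (1 - monom (1::real) 1)^(n-k))" .
  have "n + k = (n - k) + 2 * k" using assms by simp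
  then have s: "(-1::real)^(n+k) = (-1)^(n-k)" by (simp only: power_add power_mult) simp
  show ?thesis unfolding L R s by (simp flip: mult.assoc power_add)
qed


lemma hA: "(fps_exp (1::real) + 1) * (fps_const 2 / (fps_exp 1 + 1)) = fps_const 2"
proof -
  have ne: "fps_nth (fps_exp (1::real) + 1) 0 \<noteq> 0" by simp
  hence "fps_exp (1::real) + 1 \<noteq> 0" by (metis fps_zero_nth)
  with ne show ?thesis
    by (subst mult.commute, intro fps_times_divide_eq) auto
qed

lemma he_rec:
  assumes "p \<ge> 1"
  shows "higher_euler p m x + higher_euler p m (x-1) = 2 * higher_euler (p-1) m (x-1)"
proof -
  define A where "A = fps_const (2::real) / (fps_exp 1 + 1)"
  have p: "A^p = A * A^(p-1)" using assms by (cases p) auto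
  have e: "fps_exp x = fps_exp (x - 1) * fps_exp (1::real)"
    by (simp flip: fps_exp_add_mult)
  have "fps_exp x * A^p + fps_exp (x-1) * A^p = fps_exp (x-1) * ((fps_exp 1 + 1) * A) * A^(p-1)"
    unfolding p e by (simp add: algebra_simps)
  also have "\<dots> = fps_const 2 * (fps_exp (x-1) * A^(p-1))"
    unfolding A_def hA by (simp add: algebra_simps)
  finally have F: "fps_nth (fps_exp x * A^p + fps_exp (x-1) * A^p) m = fps_nth (fps_const 2 * (fps_exp (x-1) * A^(p-1))) m"
    by simp
  show ?thesis
    unfolding higher_euler_def A_def[symmetric] using arg_cong[OF F, of "\<lambda>v. fact m * v"]
    by (simp add: algebra_simps)
qed

lemma he_shift:
  "higher_euler p m (x-1) = (\<Sum>i=0..m. real (m choose i) * (-1)^(m-i) * higher_euler p i x)"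
proof -
  define G where "G = fps_exp x * (fps_const (2::real) / (fps_exp 1 + 1)) ^ p"
  have "fps_exp (x - 1) * (fps_const (2::real) / (fps_exp 1 + 1)) ^ p = G * fps_exp (-1)"
    unfolding G_def by (simp add: algebra_simps flip: fps_exp_add_mult)
  then have "higher_euler p m (x-1) = fact m * fps_nth (G * fps_exp (-1)) m"
    unfolding higher_euler_def by simp
  also have "\<dots> = fact m * (\<Sum>i=0..m. fps_nth G i * ((-1)^(m-i) / fact (m-i)))"
    unfolding fps_mult_nth by simp
  also have "\<dots> = (\<Sum>i=0..m. real (m choose i) * (-1)^(m-i) * (fact i * fps_nth G i))"
    unfolding sum_distrib_left
  proof (intro sum.cong refl)
    fix i assume "i \<in> {0..m}"
    then have "real (m choose i) = fact m / (fact i * fact (m - i))" by (simp add: binomial_fact)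
    then show "fact m * (fps_nth G i * ((-1)^(m-i) / fact (m-i))) = real (m choose i) * (-1)^(m-i) * (fact i * fps_nth G i)"
      by (simp add: field_simps)
  qed
  finally show ?thesis unfolding higher_euler_def G_def .
qed

theorem mainTheorem10:
  fixes p k n :: nat and x :: real
  assumes "p \<ge> 1" and "k \<le> n"
  shows "(\<Sum>j=0..n-k. real (n - k choose j) * (-1) ^ j * higher_euler p (j + k) x) =
         (-1) ^ (n + k + 1) * (\<Sum>j=0..k. real (k choose j) * higher_euler p (n - j) x)
         + 2 * (-1) ^ (n + k) * (\<Sum>j=0..k. real (k choose j) * higher_euler (p - 1) (n - j) (x - 1))"
proof -
  let ?e = "\<lambda>i. higher_euler p i x"
  have "(\<Sum>j=0..n-k. real (n - k choose j) * (-1) ^ j * higher_euler p (j + k) x) =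
    (-1)^(n+k) * (\<Sum>j=0..k. real (k choose j) * higher_euler p (n - j) (x - 1))"
    using comb[OF assms(2), of ?e] by (simp add: he_shift)
  also have "\<dots> = (-1)^(n+k) * (\<Sum>j=0..k. real (k choose j) * (2 * higher_euler (p - 1) (n - j) (x - 1) - higher_euler p (n - j) x))"
    using he_rec[OF assms(1)] by (intro arg_cong[where f="\<lambda>s. _ * s"] sum.cong refl) (metis add_diff_cancel_left')
  also have "\<dots> = (-1)^(n+k) * (2 * (\<Sum>j=0..k. real (k choose j) * higher_euler (p - 1) (n - j) (x - 1))
      - (\<Sum>j=0..k. real (k choose j) * higher_euler p (n - j) x))"
    by (simp add: right_diff_distrib sum_subtractf sum_distrib_left mult.left_commute)
  finally show ?thesis by (simp add: algebra_simps)
qed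

end
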